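(* Let $Q=\langle A_k,s_i:k<n,i<m\rangle$ (with $n$ minimal). Then there is an $\mathscr{L}_{\omega\omega}(Q)$-formula $\chi(x,y)$, with $x,y$ $d$-tuples of variables, such that for all $a,b\in\mathbb{N}^d$: $\mathbb{N}\models\chi(a,b)$ if and only if $a,b\in A_k$ for some $k<n$.
   Context: For $A\subseteq\mathbb{N}^d$ let $Q_A=\{X\subseteq\mathbb{N}^d:A\subseteq X\}$, $Q_A^{1}=Q_A$ and $Q_A^{-1}$ the complement of $Q_A$ in the power set of $\mathbb{N}^d$. The notation $Q=\langle A_k,s_i:k<n,i<m\rangle$ means: $\langle A_k:k<n\rangle$ is a partition of $\mathbb{N}^d$ for some $d<\omega$, $s_i\in\{1,-1\}^n$ for $i<m$, $Q=\bigcup_{i<m}\bigcap_{k<n}Q_{A_k}^{s_i(k)}$, and $n$ is minimal among all such representations of $Q$. $Q$ is a quantifier of type $\langle d\rangle$ on $\mathbb{N}$. $\mathscr{L}_{\omega\omega}(Q)$ is first-order logic extended by formulas $Qx\,\varphi(x,y)$ ($x$ a $d$-tuple of variables) with $\mathbb{N}\models Qx\,\varphi(x,b)$ iff $\{a\in\mathbb{N}^d:\mathbb{N}\models\varphi(a,b)\}\in Q$; formulas have no non-logical symbols besides $Q$. *)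

theory Defs
  imports Main
begin

text \<open>Elements of N^d are represented as lists of naturals of length d.\<close>
definition tuples :: "nat \<Rightarrow> nat list set" where
  "tuples d = {a. length a = d}"

text \<open>Q_A = {X \<subseteq> N^d. A \<subseteq> X}; Q_A^1 = Q_A, Q_A^{-1} = complement in Pow(N^d).
  A sign is encoded as a bool: True for 1, False for -1.\<close>
definition QA :: "nat \<Rightarrow> nat list set \<Rightarrow> nat list set set" where
  "QA d A = {X. X \<subseteq> tuples d \<and> A \<subseteq> X}"

definition QAs :: "nat \<Rightarrow> nat list set \<Rightarrow> bool \<Rightarrow> nat list set set" where
  "QAs d A s = (if s then QA d A else Pow (tuples d) - QA d A)"

definition is_partition :: "nat \<Rightarrow> nat \<Rightarrow> (nat \<Rightarrow> nat list set) \<Rightarrow> bool" where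
  "is_partition d n A \<longleftrightarrow>
     (\<forall>k<n. A k \<noteq> {}) \<and> (\<forall>k<n. \<forall>l<n. k \<noteq> l \<longrightarrow> A k \<inter> A l = {}) \<and>
     (\<Union>k<n. A k) = tuples d"

text \<open>Q is represented by the partition <A_k : k<n> of N^d and sign vectors s_i (i<m).\<close>
definition represents ::
  "nat \<Rightarrow> nat list set set \<Rightarrow> nat \<Rightarrow> nat \<Rightarrow> (nat \<Rightarrow> nat list set) \<Rightarrow> (nat \<Rightarrow> nat \<Rightarrow> bool) \<Rightarrow> bool" where
  "represents d Q n m A s \<longleftrightarrow>
     is_partition d n A \<and> Q = (\<Union>i<m. Pow (tuples d) \<inter> (\<Inter>k<n. QAs d (A k) (s i k)))"

definition min_represents ::
  "nat \<Rightarrow> nat list set set \<Rightarrow> nat \<Rightarrow> nat \<Rightarrow> (nat \<Rightarrow> nat list set) \<Rightarrow> (nat \<Rightarrow> nat \<Rightarrow> bool) \<Rightarrow> bool" where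
  "min_represents d Q n m A s \<longleftrightarrow>
     represents d Q n m A s \<and> (\<forall>n' m' B t. represents d Q n' m' B t \<longrightarrow> n \<le> n')"

text \<open>Formulas of L_{omega omega}(Q) with no non-logical symbols (variables are naturals).\<close>
datatype fm = Eq nat nat | Neg fm | Conj fm fm | Ex nat fm | Qu "nat list" fm

fun fv :: "fm \<Rightarrow> nat set" where
  "fv (Eq x y) = {x, y}"
| "fv (Neg p) = fv p"
| "fv (Conj p q) = fv p \<union> fv q"
| "fv (Ex x p) = fv p - {x}"
| "fv (Qu xs p) = fv p - set xs"

fun wf :: "nat \<Rightarrow> fm \<Rightarrow> bool" where
  "wf d (Eq x y) = True"
| "wf d (Neg p) = wf d p"
| "wf d (Conj p q) = (wf d p \<and> wf d q)"
| "wf d (Ex x p) = wf d p"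
| "wf d (Qu xs p) = (length xs = d \<and> distinct xs \<and> wf d p)"

fun upds :: "(nat \<Rightarrow> nat) \<Rightarrow> nat list \<Rightarrow> nat list \<Rightarrow> (nat \<Rightarrow> nat)" where
  "upds e (x # xs) (a # as) = upds (e(x := a)) xs as"
| "upds e _ _ = e"

fun sat :: "nat list set set \<Rightarrow> (nat \<Rightarrow> nat) \<Rightarrow> fm \<Rightarrow> bool" where
  "sat Q e (Eq x y) = (e x = e y)"
| "sat Q e (Neg p) = (\<not> sat Q e p)"
| "sat Q e (Conj p q) = (sat Q e p \<and> sat Q e q)"
| "sat Q e (Ex x p) = (\<exists>a. sat Q (e(x := a)) p)"
| "sat Q e (Qu xs p) = ({a \<in> tuples (length xs). sat Q (upds e xs a) p} \<in> Q)"

end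

theory Submission
  imports Defs
begin


definition TT :: fm where "TT = Neg (Ex 0 (Neg (Eq 0 0)))"
lemma sat_TT[simp]: "sat Q e TT" by (simp add: TT_def)
lemma fv_TT[simp]: "fv TT = {}" by (simp add: TT_def)
lemma wf_TT[simp]: "wf d TT" by (simp add: TT_def)

fun eqt :: "nat list \<Rightarrow> nat list \<Rightarrow> fm" where
  "eqt (u#us) (v#vs) = Conj (Eq u v) (eqt us vs)"
| "eqt _ _ = TT"

lemma sat_eqt: "length us = length vs \<Longrightarrow> sat Q e (eqt us vs) \<longleftrightarrow> map e us = map e vs"
  by (induction us vs rule: eqt.induct) auto
lemma fv_eqt: "fv (eqt us vs) \<subseteq> set us \<union> set vs"
  by (induction us vs rule: eqt.induct) auto
lemma wf_eqt[simp]: "wf d (eqt us vs)"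
  by (induction us vs rule: eqt.induct) auto

fun conjs :: "fm list \<Rightarrow> fm" where
  "conjs [] = TT" | "conjs (p#ps) = Conj p (conjs ps)"
lemma sat_conjs: "sat Q e (conjs ps) \<longleftrightarrow> (\<forall>p\<in>set ps. sat Q e p)" by (induction ps) auto
lemma fv_conjs: "fv (conjs ps) = (\<Union>p\<in>set ps. fv p)" by (induction ps) auto
lemma wf_conjs: "wf d (conjs ps) \<longleftrightarrow> (\<forall>p\<in>set ps. wf d p)" by (induction ps) auto

definition Exs :: "nat list \<Rightarrow> fm \<Rightarrow> fm" where "Exs vs p = foldr Ex vs p"

lemma sat_Exs: "sat Q e (Exs vs p) \<longleftrightarrow> (\<exists>as. length as = length vs \<and> sat Q (upds e vs as) p)"
proof (induction vs arbitrary: e)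
  case Nil then show ?case by (simp add: Exs_def)
next
  case (Cons v vs)
  show ?case
  proof
    assume "sat Q e (Exs (v#vs) p)"
    then obtain a where "sat Q (e(v:=a)) (Exs vs p)" by (auto simp: Exs_def)
    then obtain as where "length as = length vs" "sat Q (upds (e(v:=a)) vs as) p"
      using Cons.IH by blast
    then show "\<exists>as. length as = length (v#vs) \<and> sat Q (upds e (v#vs) as) p"
      by (intro exI[of _ "a#as"]) simp
  next
    assume "\<exists>as. length as = length (v#vs) \<and> sat Q (upds e (v#vs) as) p"
    then obtain as where as: "length as = length (v#vs)" "sat Q (upds e (v#vs) as) p" by blast
    then obtain a as' where "as = a#as'" by (cases as) auto
    with as have "sat Q (e(v:=a)) (Exs vs p)" using Cons.IH[of "e(v:=a)"] by (auto simp del: fun_upd_apply)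
    then show "sat Q e (Exs (v#vs) p)" by (auto simp: Exs_def)
  qed
qed

lemma fv_Exs[simp]: "fv (Exs vs p) = fv p - set vs"
  by (induction vs) (auto simp: Exs_def)
lemma wf_Exs[simp]: "wf d (Exs vs p) = wf d p"
  by (induction vs) (auto simp: Exs_def)

definition Forall :: "nat list \<Rightarrow> fm \<Rightarrow> fm" where "Forall vs p = Neg (Exs vs (Neg p))"
lemma sat_Forall: "sat Q e (Forall vs p) \<longleftrightarrow> (\<forall>as. length as = length vs \<longrightarrow> sat Q (upds e vs as) p)"
  by (auto simp: Forall_def sat_Exs)
lemma fv_Forall[simp]: "fv (Forall vs p) = fv p - set vs" by (simp add: Forall_def)
lemma wf_Forall[simp]: "wf d (Forall vs p) = wf d p" by (simp add: Forall_def)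

definition Iff :: "fm \<Rightarrow> fm \<Rightarrow> fm" where
  "Iff p q = Conj (Neg (Conj p (Neg q))) (Neg (Conj q (Neg p)))"
lemma sat_Iff[simp]: "sat Q e (Iff p q) \<longleftrightarrow> (sat Q e p \<longleftrightarrow> sat Q e q)" by (auto simp: Iff_def)
lemma fv_Iff[simp]: "fv (Iff p q) = fv p \<union> fv q" by (auto simp: Iff_def)
lemma wf_Iff[simp]: "wf d (Iff p q) = (wf d p \<and> wf d q)" by (auto simp: Iff_def)

lemma upds_notin: "v \<notin> set vs \<Longrightarrow> upds e vs as v = e v"
  by (induction e vs as rule: upds.induct) auto
lemma map_upds_disj: "set vs \<inter> set us = {} \<Longrightarrow> map (upds e vs as) us = map e us"
  by (induction us) (auto simp: upds_notin)
lemma map_upds_self: "distinct vs \<Longrightarrow> length vs = length as \<Longrightarrow> map (upds e vs as) vs = as"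
  by (induction e vs as rule: upds.induct) (auto simp: upds_notin)
lemma upds_append: "length vs = length as \<Longrightarrow> upds e (vs@vs') (as@as') = upds (upds e vs as) vs' as'"
  by (induction e vs as rule: upds.induct) auto

lemma map_upds_concat:
  assumes "distinct L" "i \<in> set L" "\<forall>l\<in>set L. distinct (zs l) \<and> length (zs l) = length (t l)"
   "\<forall>l\<in>set L. \<forall>l'\<in>set L. l\<noteq>l' \<longrightarrow> set (zs l) \<inter> set (zs l') = {}"
  shows "map (upds e (concat (map zs L)) (concat (map t L))) (zs i) = t i"
  using assms
proof (induction L arbitrary: e)
  case Nil thus ?case by simp
next
  case (Cons j L)
  have eq: "upds e (concat (map zs (j#L))) (concat (map t (j#L))) = upds (upds e (zs j) (t j)) (concat (map zs L)) (concat (map t L))"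
    using Cons.prems by (simp add: upds_append)
  show ?case
  proof (cases "i = j")
    case True
    have "set (concat (map zs L)) \<inter> set (zs i) = {}" using Cons.prems True by auto
    then show ?thesis unfolding eq using True Cons.prems by (simp add: map_upds_disj map_upds_self)
  next
    case False then show ?thesis unfolding eq using Cons.IH Cons.prems by simp
  qed
qed

lemma length_concat_eq: "\<forall>l\<in>set L. length (t l) = length (zs l) \<Longrightarrow>
  length (concat (map t L)) = length (concat (map zs L))"
  by (induction L) auto



definition zs :: "nat \<Rightarrow> nat \<Rightarrow> nat list" where "zs d i = [(3+i)*d..<(4+i)*d]"
definition zz :: "nat \<Rightarrow> nat \<Rightarrow> nat list" where "zz d n = concat (map (zs d) [0..<n])"
definition ws :: "nat \<Rightarrow> nat list" where "ws d = [2*d..<3*d]"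
definition nq :: "nat \<Rightarrow> nat list \<Rightarrow> fm" where "nq d u = Neg (eqt (ws d) u)"
definition body :: "nat \<Rightarrow> nat \<Rightarrow> nat list \<Rightarrow> fm" where
  "body d n u = Conj (nq d u) (conjs (map (\<lambda>i. nq d (zs d i)) [0..<n]))"
definition chi :: "nat \<Rightarrow> nat \<Rightarrow> fm" where
  "chi d n = Conj (Forall (zz d n) (Iff (Qu (ws d) (body d n [0..<d])) (Qu (ws d) (body d n [d..<2*d]))))
     (Iff (Qu (ws d) (nq d [0..<d])) (Qu (ws d) (nq d [d..<2*d])))"

lemma zs_mem: "x \<in> set (zs d i) \<longleftrightarrow> (3+i)*d \<le> x \<and> x < (4+i)*d" by (simp add: zs_def)
lemma zs_lb: "x \<in> set (zs d i) \<Longrightarrow> 3*d \<le> x"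
proof -
  assume "x \<in> set (zs d i)"
  moreover have "3*d \<le> (3+i)*d" by (rule mult_le_mono1) simp
  ultimately show ?thesis unfolding zs_mem by linarith
qed
lemma zs_disj: "i \<noteq> j \<Longrightarrow> set (zs d i) \<inter> set (zs d j) = {}"
proof -
  assume "i \<noteq> j"
  have *: "set (zs d i) \<inter> set (zs d j) = {}" if "i < j" for i j
  proof -
    have "(4+i)*d \<le> (3+j)*d" by (rule mult_le_mono1) (use that in simp)
    moreover have "x \<notin> set (zs d i) \<or> x \<notin> set (zs d j)" if "(4+i)*d \<le> (3+j)*d" for x
      using that unfolding zs_mem by linarith
    ultimately show ?thesis by blast
  qed
  show ?thesis using \<open>i \<noteq> j\<close> *[of i j] *[of j i] by (cases "i < j") auto
qed
lemma zz_lb: "x \<in> set (zz d n) \<Longrightarrow> 3*d \<le> x" by (auto simp: zz_def dest: zs_lb)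
lemma length_zs[simp]: "length (zs d i) = d" by (simp add: zs_def algebra_simps)
lemma distinct_zs[simp]: "distinct (zs d i)" by (simp add: zs_def)
lemma length_ws[simp]: "length (ws d) = d" by (simp add: ws_def)
lemma distinct_ws[simp]: "distinct (ws d)" by (simp add: ws_def)
lemma ws_zs: "set (ws d) \<inter> set (zs d i) = {}" by (auto simp: ws_def dest: zs_lb)

lemma sat_nq: "length u = d \<Longrightarrow> sat Q e (nq d u) \<longleftrightarrow> map e (ws d) \<noteq> map e u"
  by (simp add: nq_def sat_eqt)

lemma qu_body:
  assumes "length u = d" "set u \<inter> set (ws d) = {}"
  shows "sat Q E (Qu (ws d) (body d n u)) \<longleftrightarrow>
     {c\<in>tuples d. c \<noteq> map E u \<and> c \<notin> (\<lambda>i. map E (zs d i)) ` {..<n}} \<in> Q"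
proof -
  have "{c \<in> tuples (length (ws d)). sat Q (upds E (ws d) c) (body d n u)} =
        {c\<in>tuples d. c \<noteq> map E u \<and> c \<notin> (\<lambda>i. map E (zs d i)) ` {..<n}}"
  proof (rule set_eqI)
    fix c
    show "c \<in> {c \<in> tuples (length (ws d)). sat Q (upds E (ws d) c) (body d n u)} \<longleftrightarrow>
          c \<in> {c\<in>tuples d. c \<noteq> map E u \<and> c \<notin> (\<lambda>i. map E (zs d i)) ` {..<n}}"
    proof (cases "c \<in> tuples d")
      case True
      then have l: "length c = d" by (simp add: tuples_def)
      have 1: "map (upds E (ws d) c) (ws d) = c" using l by (simp add: map_upds_self)
      have 2: "map (upds E (ws d) c) u = map E u" using assms by (simp add: map_upds_disj inf_commute)
      have 3: "map (upds E (ws d) c) (zs d i) = map E (zs d i)" for i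
        using ws_zs by (simp add: map_upds_disj)
      have b: "sat Q (upds E (ws d) c) (body d n u) \<longleftrightarrow> c \<noteq> map E u \<and> (\<forall>i<n. c \<noteq> map E (zs d i))"
      proof -
        have b0: "sat Q (upds E (ws d) c) (body d n u) \<longleftrightarrow> sat Q (upds E (ws d) c) (nq d u) \<and>
            (\<forall>i<n. sat Q (upds E (ws d) c) (nq d (zs d i)))"
          by (auto simp: body_def sat_conjs)
        show ?thesis using assms by (simp add: b0 sat_nq 1 2 3)
      qed
      show ?thesis using True b by auto
    next
      case False then show ?thesis by simp
    qed
  qed
  then show ?thesis by simp
qed

lemma qu_nq:
  assumes "length u = d" "set u \<inter> set (ws d) = {}"
  shows "sat Q E (Qu (ws d) (nq d u)) \<longleftrightarrow> {c\<in>tuples d. c \<noteq> map E u} \<in> Q"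
proof -
  have "{c \<in> tuples (length (ws d)). sat Q (upds E (ws d) c) (nq d u)} =
        {c\<in>tuples d. c \<noteq> map E u}"
  proof (rule set_eqI)
    fix c
    show "c \<in> {c \<in> tuples (length (ws d)). sat Q (upds E (ws d) c) (nq d u)} \<longleftrightarrow>
          c \<in> {c\<in>tuples d. c \<noteq> map E u}"
    proof (cases "c \<in> tuples d")
      case True
      then have l: "length c = d" by (simp add: tuples_def)
      have 1: "map (upds E (ws d) c) (ws d) = c" using l by (simp add: map_upds_self)
      have 2: "map (upds E (ws d) c) u = map E u" using assms by (simp add: map_upds_disj inf_commute)
      have b: "sat Q (upds E (ws d) c) (nq d u) \<longleftrightarrow> c \<noteq> map E u"
        using assms by (simp add: sat_nq 1 2)
      show ?thesis using True b by simp
    next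
      case False then show ?thesis by simp
    qed
  qed
  then show ?thesis by simp
qed

definition RS :: "nat list set set \<Rightarrow> nat \<Rightarrow> nat \<Rightarrow> nat list \<Rightarrow> nat list \<Rightarrow> bool" where
  "RS Q d n a b = (\<forall>T. (T = {} \<or> (\<exists>t. (\<forall>i<n. t i \<in> tuples d) \<and> T = t ` {..<n})) \<longrightarrow>
            ({c\<in>tuples d. c\<noteq>a \<and> c\<notin>T}\<in>Q \<longleftrightarrow> {c\<in>tuples d. c\<noteq>b \<and> c\<notin>T}\<in>Q))"

lemma sem_chi:
  assumes a: "a \<in> tuples d" and b: "b \<in> tuples d"
  shows "sat Q (upds (upds e [0..<d] a) [d..<2*d] b) (chi d n) \<longleftrightarrow> RS Q d n a b"
proof -
  define E where "E = upds (upds e [0..<d] a) [d..<2*d] b"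
  have la: "length a = d" and lb: "length b = d" using a b by (auto simp: tuples_def)
  have dxz: "set [0..<d] \<inter> set (zz d n) = {}" "set [d..<2*d] \<inter> set (zz d n) = {}"
    by (auto dest: zz_lb)
  have dxw: "set [0..<d] \<inter> set (ws d) = {}" "set [d..<2*d] \<inter> set (ws d) = {}"
    by (auto simp: ws_def)
  have Ea: "map E [0..<d] = a" unfolding E_def using la
    by (subst map_upds_disj) (auto simp: map_upds_self)
  have Eb: "map E [d..<2*d] = b" unfolding E_def using lb by (simp add: map_upds_self)
  have E2a: "map (upds E (zz d n) Z) [0..<d] = a" for Z
    using dxz Ea by (simp add: map_upds_disj inf_commute)
  have E2b: "map (upds E (zz d n) Z) [d..<2*d] = b" for Z
    using dxz Eb by (simp add: map_upds_disj inf_commute)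
  have sat_eq: "sat Q E (chi d n) \<longleftrightarrow>
     (\<forall>Z. length Z = length (zz d n) \<longrightarrow>
       ({c\<in>tuples d. c \<noteq> a \<and> c \<notin> (\<lambda>i. map (upds E (zz d n) Z) (zs d i)) ` {..<n}} \<in> Q \<longleftrightarrow>
        {c\<in>tuples d. c \<noteq> b \<and> c \<notin> (\<lambda>i. map (upds E (zz d n) Z) (zs d i)) ` {..<n}} \<in> Q)) \<and>
     ({c\<in>tuples d. c \<noteq> a} \<in> Q \<longleftrightarrow> {c\<in>tuples d. c \<noteq> b} \<in> Q)"
  proof -
    have q1: "sat Q E' (Qu (ws d) (body d n u)) \<longleftrightarrow>
     {c\<in>tuples d. c \<noteq> map E' u \<and> c \<notin> (\<lambda>i. map E' (zs d i)) ` {..<n}} \<in> Q"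
      if "u = [0..<d] \<or> u = [d..<2*d]" for E' u by (rule qu_body) (use that dxw in auto)
    have q2: "sat Q E' (Qu (ws d) (nq d u)) \<longleftrightarrow> {c\<in>tuples d. c \<noteq> map E' u} \<in> Q"
      if "u = [0..<d] \<or> u = [d..<2*d]" for E' u by (rule qu_nq) (use that dxw in auto)
    show ?thesis unfolding chi_def sat.simps(3) sat_Forall sat_Iff
      q1[OF disjI1[OF refl]] q1[OF disjI2[OF refl]] q2[OF disjI1[OF refl]] q2[OF disjI2[OF refl]]
      E2a E2b Ea Eb ..
  qed
  have "sat Q E (chi d n) \<longleftrightarrow> RS Q d n a b"
  proof
    assume S: "sat Q E (chi d n)"
    show "RS Q d n a b" unfolding RS_def
    proof (intro allI impI)
      fix T assume "T = {} \<or> (\<exists>t. (\<forall>i<n. t i \<in> tuples d) \<and> T = t ` {..<n})"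
      then show "({c\<in>tuples d. c\<noteq>a \<and> c\<notin>T}\<in>Q \<longleftrightarrow> {c\<in>tuples d. c\<noteq>b \<and> c\<notin>T}\<in>Q)"
      proof
        assume "T = {}" then show ?thesis using conjunct2[OF sat_eq[THEN iffD1, OF S]] by simp
      next
        assume "\<exists>t. (\<forall>i<n. t i \<in> tuples d) \<and> T = t ` {..<n}"
        then obtain t where t: "\<forall>i<n. t i \<in> tuples d" "T = t ` {..<n}" by blast
        define Z where "Z = concat (map t [0..<n])"
        have lt: "\<forall>l\<in>set [0..<n]. length (t l) = length (zs d l)" using t by (auto simp: tuples_def)
        have lZ: "length Z = length (zz d n)" unfolding Z_def zz_def
          by (rule length_concat_eq[OF lt])
        have pw: "map (upds E (zz d n) Z) (zs d i) = t i" if "i < n" for i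
          unfolding Z_def zz_def
          apply (rule map_upds_concat)
          using that lt by (simp_all add: zs_disj)
        have img: "(\<lambda>i. map (upds E (zz d n) Z) (zs d i)) ` {..<n} = T" unfolding t(2) by (rule image_cong) (simp_all add: pw)
        note AllZ = conjunct1[OF sat_eq[THEN iffD1, OF S]]
        from AllZ[rule_format, OF lZ] show ?thesis unfolding img .
      qed
    qed
  next
    assume R: "RS Q d n a b"
    have "(\<forall>Z. length Z = length (zz d n) \<longrightarrow>
       ({c\<in>tuples d. c \<noteq> a \<and> c \<notin> (\<lambda>i. map (upds E (zz d n) Z) (zs d i)) ` {..<n}} \<in> Q \<longleftrightarrow>
        {c\<in>tuples d. c \<noteq> b \<and> c \<notin> (\<lambda>i. map (upds E (zz d n) Z) (zs d i)) ` {..<n}} \<in> Q))"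
    proof (intro allI impI)
      fix Z :: "nat list"
      have h: "(\<lambda>i. map (upds E (zz d n) Z) (zs d i)) ` {..<n} = {} \<or>
         (\<exists>t. (\<forall>i<n. t i \<in> tuples d) \<and> (\<lambda>i. map (upds E (zz d n) Z) (zs d i)) ` {..<n} = t ` {..<n})"
        by (rule disjI2, rule exI[of _ "\<lambda>i. map (upds E (zz d n) Z) (zs d i)"]) (simp add: tuples_def)
      show "({c\<in>tuples d. c \<noteq> a \<and> c \<notin> (\<lambda>i. map (upds E (zz d n) Z) (zs d i)) ` {..<n}} \<in> Q \<longleftrightarrow>
        {c\<in>tuples d. c \<noteq> b \<and> c \<notin> (\<lambda>i. map (upds E (zz d n) Z) (zs d i)) ` {..<n}} \<in> Q)"
        using R[unfolded RS_def, rule_format, OF h] .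
    qed
    moreover have "({c\<in>tuples d. c \<noteq> a} \<in> Q \<longleftrightarrow> {c\<in>tuples d. c \<noteq> b} \<in> Q)"
      using R[unfolded RS_def, rule_format, of "{}"] by simp
    ultimately show "sat Q E (chi d n)" using sat_eq by blast
  qed
  then show ?thesis by (simp add: E_def)
qed

lemma wf_chi: "wf d (chi d n)"
  by (simp add: chi_def body_def nq_def wf_conjs)

lemma fv_chi: "fv (chi d n) \<subseteq> set [0..<d] \<union> set [d..<2*d]"
proof -
  have nq: "fv (nq d u) \<subseteq> set (ws d) \<union> set u" for u using fv_eqt by (simp add: nq_def)
  have bd: "fv (body d n u) \<subseteq> set (ws d) \<union> set u \<union> set (zz d n)" for u
  proof -
    have "fv (conjs (map (\<lambda>i. nq d (zs d i)) [0..<n])) \<subseteq> set (ws d) \<union> set (zz d n)"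
      using nq by (force simp: fv_conjs zz_def)
    then show ?thesis using nq[of u] by (auto simp: body_def)
  qed
  show ?thesis using nq[of "[0..<d]"] nq[of "[d..<2*d]"] bd[of "[0..<d]"] bd[of "[d..<2*d]"]
    unfolding chi_def by auto
qed



definition idx :: "nat \<Rightarrow> (nat \<Rightarrow> nat list set) \<Rightarrow> nat list set \<Rightarrow> nat set" where
  "idx n A X = {l. l < n \<and> A l \<subseteq> X}"

lemma QAs_mem: "X \<in> QAs d B b \<longleftrightarrow> X \<subseteq> tuples d \<and> (b \<longleftrightarrow> B \<subseteq> X)"
  by (auto simp: QAs_def QA_def)

lemma mem_U: "X \<in> (\<Union>i<m. Pow (tuples d) \<inter> (\<Inter>k<n. QAs d (A k) (s i k))) \<longleftrightarrow>
   X \<subseteq> tuples d \<and> (\<exists>i<m. \<forall>k<n. s i k \<longleftrightarrow> A k \<subseteq> X)"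
  unfolding UN_iff INT_iff Int_iff Pow_iff QAs_mem by auto

lemma rep_char:
  "represents d Q n m A s \<Longrightarrow> X \<in> Q \<longleftrightarrow> X \<subseteq> tuples d \<and> (\<exists>i<m. \<forall>l<n. s i l \<longleftrightarrow> l \<in> idx n A X)"
  unfolding represents_def using mem_U[where X=X and m=m and d=d and n=n and A=A and s=s] by (auto simp: idx_def)

lemma rep_from:
  assumes "is_partition d n B" "\<And>X. X \<in> Q \<longleftrightarrow> X \<subseteq> tuples d \<and> G (idx n B X)"
  shows "\<exists>m t. represents d Q n m B t"
proof -
  define F where "F = {S. S \<subseteq> {..<n} \<and> G S}"
  have "finite F" unfolding F_def by (rule finite_subset[of _ "Pow {..<n}"]) auto
  then obtain L where L: "set L = F" using finite_list by blast
  define t where "t i l = (l \<in> L ! i)" for i l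
  have "Q = (\<Union>i<length L. Pow (tuples d) \<inter> (\<Inter>k<n. QAs d (B k) (t i k)))"
  proof (rule set_eqI)
    fix X
    have "X \<in> (\<Union>i<length L. Pow (tuples d) \<inter> (\<Inter>k<n. QAs d (B k) (t i k))) \<longleftrightarrow>
       X \<subseteq> tuples d \<and> (\<exists>i<length L. \<forall>k<n. t i k \<longleftrightarrow> k \<in> idx n B X)"
      unfolding mem_U by (auto simp: idx_def)
    also have "\<dots> \<longleftrightarrow> X \<subseteq> tuples d \<and> idx n B X \<in> F"
    proof -
      have "(\<exists>i<length L. \<forall>k<n. t i k \<longleftrightarrow> k \<in> idx n B X) \<longleftrightarrow> idx n B X \<in> F"
      proof
        assume "\<exists>i<length L. \<forall>k<n. t i k \<longleftrightarrow> k \<in> idx n B X"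
        then obtain i where i: "i < length L" "\<forall>k<n. k \<in> L ! i \<longleftrightarrow> k \<in> idx n B X"
          by (auto simp: t_def)
        have "L ! i \<in> F" using i L nth_mem by blast
        then have "L ! i \<subseteq> {..<n}" by (simp add: F_def)
        moreover have "idx n B X \<subseteq> {..<n}" by (auto simp: idx_def)
        ultimately have "L ! i = idx n B X" using i(2) by blast
        then show "idx n B X \<in> F" using \<open>L ! i \<in> F\<close> by simp
      next
        assume "idx n B X \<in> F"
        then obtain i where "i < length L" "L ! i = idx n B X" using L by (metis in_set_conv_nth)
        then show "\<exists>i<length L. \<forall>k<n. t i k \<longleftrightarrow> k \<in> idx n B X" by (auto simp: t_def)
      qed
      then show ?thesis by simp
    qed
    also have "\<dots> \<longleftrightarrow> X \<in> Q" using assms(2)[of X] by (auto simp: F_def idx_def)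
    finally show "X \<in> Q \<longleftrightarrow> X \<in> (\<Union>i<length L. Pow (tuples d) \<inter> (\<Inter>k<n. QAs d (B k) (t i k)))" by simp
  qed
  then have "represents d Q n (length L) B t" using assms(1) by (simp add: represents_def)
  then show ?thesis by blast
qed

lemma insens:
  assumes pq: "p \<noteq> q" "p < n" "q < n"
    and H: "\<And>S. S \<subseteq> {..<n} \<Longrightarrow> P (S - {p}) \<longleftrightarrow> P (S - {q})"
    and S: "S1 \<subseteq> {..<n}" "S2 \<subseteq> {..<n}" "S1 - {p,q} = S2 - {p,q}"
      "(p \<in> S1 \<and> q \<in> S1) \<longleftrightarrow> (p \<in> S2 \<and> q \<in> S2)"
  shows "P S1 \<longleftrightarrow> P S2"
proof -
  have aux: "P S \<longleftrightarrow> P (S - {p,q})" if "S \<subseteq> {..<n}" "\<not>(p \<in> S \<and> q \<in> S)" for S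
  proof -
    consider "p \<in> S" | "q \<in> S" | "p \<notin> S \<and> q \<notin> S" by blast
    then show ?thesis
    proof cases
      case 1
      then have "q \<notin> S" using that by blast
      then have "S - {q} = S" "S - {p} = S - {p,q}" by auto
      then show ?thesis using H[OF that(1)] by simp
    next
      case 2
      then have "p \<notin> S" using that by blast
      then have "S - {p} = S" "S - {q} = S - {p,q}" by auto
      then show ?thesis using H[OF that(1)] by simp
    next
      case 3
      then have "S - {p,q} = S" by auto
      then show ?thesis by simp
    qed
  qed
  show ?thesis
  proof (cases "p \<in> S1 \<and> q \<in> S1")
    case True
    then have "S1 = S2" using S by blast
    then show ?thesis by simp
  next
    case False
    then have "\<not> (p \<in> S2 \<and> q \<in> S2)" using S by blast
    then show ?thesis using aux[OF S(1) False] aux[OF S(2)] S(3) by simp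
  qed
qed



lemma merge:
  assumes part: "is_partition d n A"
    and Qc: "\<And>X. X \<in> Q \<longleftrightarrow> X \<subseteq> tuples d \<and> P (idx n A X)"
    and pq: "p < q" "q < n"
    and H: "\<And>S. S \<subseteq> {..<n} \<Longrightarrow> P (S - {p}) \<longleftrightarrow> P (S - {q})"
  shows "\<exists>m t B. represents d Q (n-1) m B t"
proof -
  define B where "B l = (if l = p then A p \<union> A q else if l = q then A (n-1) else A l)" for l
  have ne: "\<forall>k<n. A k \<noteq> {}" and dj: "\<forall>k<n. \<forall>l<n. k \<noteq> l \<longrightarrow> A k \<inter> A l = {}"
    and un: "(\<Union>k<n. A k) = tuples d"
    using part by (auto simp: is_partition_def)
  have dj': False if "x \<in> A k" "x \<in> A l" "k<n" "l<n" "k\<noteq>l" for k l x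
    using dj that by blast
  have partB: "is_partition d (n-1) B"
    unfolding is_partition_def
  proof (intro conjI allI impI)
    fix k assume "k < n-1" then show "B k \<noteq> {}" using ne pq by (auto simp: B_def)
  next
    fix k l assume kl: "k < n-1" "l < n-1" "k \<noteq> l"
    show "B k \<inter> B l = {}"
    proof (rule ccontr)
      assume "B k \<inter> B l \<noteq> {}"
      then obtain x where x: "x \<in> B k" "x \<in> B l" by blast
      show False using x kl pq unfolding B_def by (auto split: if_splits elim: dj')
    qed
  next
    show "(\<Union>k<n-1. B k) = tuples d"
    proof
      show "(\<Union>k<n-1. B k) \<subseteq> tuples d"
      proof
        fix x assume "x \<in> (\<Union>k<n-1. B k)"
        then obtain k where k: "k < n-1" "x \<in> B k" by blast
        have sub: "A l \<subseteq> tuples d" if "l < n" for l using un that by blast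
        have "x \<in> A p \<or> x \<in> A q \<or> x \<in> A (n-1) \<or> x \<in> A k" using k by (auto simp: B_def split: if_splits)
        moreover have "k < n" using k by simp
        ultimately show "x \<in> tuples d" using sub[of p] sub[of q] sub[of "n-1"] sub[of k] pq k by (auto simp del: One_nat_def)
      qed
    next
      show "tuples d \<subseteq> (\<Union>k<n-1. B k)"
      proof
        fix x assume "x \<in> tuples d"
        then obtain l where l: "l < n" "x \<in> A l" using un by blast
        consider "l = p \<or> l = q" | "l = n-1 \<and> l \<noteq> p \<and> l \<noteq> q" | "l \<noteq> n-1 \<and> l \<noteq> p \<and> l \<noteq> q" by blast
        then show "x \<in> (\<Union>k<n-1. B k)"
        proof cases
          case 1 then have "x \<in> B p" using l by (auto simp: B_def)
          moreover have "p < n-1" using pq by simp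
          ultimately show ?thesis by blast
        next
          case 2 then have "x \<in> B q" using l pq by (auto simp: B_def)
          moreover have "q < n-1" using pq 2 by arith
          ultimately show ?thesis by blast
        next
          case 3 then have "x \<in> B l" using l by (auto simp: B_def)
          moreover have "l < n-1" using l 3 by arith
          ultimately show ?thesis by blast
        qed
      qed
    qed
  qed
  have r1: "l \<in> idx n A Z \<longleftrightarrow> (if l = n-1 then q else l) \<in> idx (n-1) B Z"
    if "l < n" "l \<noteq> p" "l \<noteq> q" for l Z
  proof (cases "l = n-1")
    case True
    then have "q < n-1" using that pq by simp
    then show ?thesis using True that pq by (simp add: idx_def B_def)
  next
    case False
    then have "l < n-1" using that by simp
    then show ?thesis using False that pq by (simp add: idx_def B_def)
  qed
  have r2: "(p \<in> idx n A Z \<and> q \<in> idx n A Z) \<longleftrightarrow> p \<in> idx (n-1) B Z" for Z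
    using pq by (auto simp: idx_def B_def)
  define G where "G S' = (\<exists>Y. Y \<subseteq> tuples d \<and> idx (n-1) B Y = S' \<and> P (idx n A Y))" for S'
  have QB: "X \<in> Q \<longleftrightarrow> X \<subseteq> tuples d \<and> G (idx (n-1) B X)" for X
  proof
    assume "X \<in> Q" then show "X \<subseteq> tuples d \<and> G (idx (n-1) B X)" using Qc G_def by blast
  next
    assume a: "X \<subseteq> tuples d \<and> G (idx (n-1) B X)"
    then obtain Y where Y: "idx (n-1) B Y = idx (n-1) B X" "P (idx n A Y)" unfolding G_def by blast
    have e1: "idx n A Y - {p,q} = idx n A X - {p,q}"
    proof (rule set_eqI)
      fix l
      show "l \<in> idx n A Y - {p,q} \<longleftrightarrow> l \<in> idx n A X - {p,q}"
      proof (cases "l < n \<and> l \<noteq> p \<and> l \<noteq> q")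
        case True then show ?thesis using r1[of l Y] r1[of l X] Y(1) by simp
      next
        case False then show ?thesis by (auto simp: idx_def)
      qed
    qed
    have e2: "(p \<in> idx n A Y \<and> q \<in> idx n A Y) \<longleftrightarrow> (p \<in> idx n A X \<and> q \<in> idx n A X)"
      using r2[of Y] r2[of X] Y(1) by simp
    have "P (idx n A Y) \<longleftrightarrow> P (idx n A X)"
      by (rule insens[of p q n P]) (use pq H e1 e2 in \<open>auto simp: idx_def\<close>)
    then show "X \<in> Q" using Qc a Y(2) by blast
  qed
  show ?thesis using rep_from[OF partB QB] by blast
qed

lemma math:
  assumes part: "is_partition d n A"
    and Qc: "\<And>X. X \<in> Q \<longleftrightarrow> X \<subseteq> tuples d \<and> P (idx n A X)"
    and minimal: "\<And>n' m' B t. represents d Q n' m' B t \<Longrightarrow> n \<le> n'"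
    and a: "a \<in> tuples d" and b: "b \<in> tuples d"
  shows "RS Q d n a b \<longleftrightarrow> (\<exists>k<n. a \<in> A k \<and> b \<in> A k)"
proof -
  have ne: "\<forall>k<n. A k \<noteq> {}" and dj: "\<forall>k<n. \<forall>l<n. k \<noteq> l \<longrightarrow> A k \<inter> A l = {}"
    and un: "(\<Union>k<n. A k) = tuples d"
    using part by (auto simp: is_partition_def)
  have sub: "A l \<subseteq> tuples d" if "l < n" for l using un that by blast
  have same: "l = k" if "l < n" "k < n" "x \<in> A l" "x \<in> A k" for l k x
    using dj that by blast
  have idxT: "idx n A {c\<in>tuples d. c\<noteq>a' \<and> c\<notin>T} = {l. l < n \<and> a' \<notin> A l \<and> A l \<inter> T = {}}" for a' T
    using sub by (auto simp: idx_def)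
  obtain k where k: "k < n" "a \<in> A k" using a un by blast
  obtain j where j: "j < n" "b \<in> A j" using b un by blast
  show ?thesis
  proof
    assume R: "RS Q d n a b"
    show "\<exists>k<n. a \<in> A k \<and> b \<in> A k"
    proof (cases "k = j")
      case True then show ?thesis using k j by blast
    next
      case False
      have H: "P (S - {k}) \<longleftrightarrow> P (S - {j})" if S: "S \<subseteq> {..<n}" for S
      proof -
        define K where "K = {..<n} - S"
        define r where "r l = (SOME x. x \<in> A l)" for l
        have r: "r l \<in> A l" if "l < n" for l using ne that unfolding r_def by (meson ex_in_conv someI)
        define T where "T = r ` K"
        have real: "T = {} \<or> (\<exists>t. (\<forall>i<n. t i \<in> tuples d) \<and> T = t ` {..<n})"
        proof (cases "K = {}")
          case True then show ?thesis by (simp add: T_def)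
        next
          case False
          then obtain k0 where k0: "k0 \<in> K" by blast
          define t where "t i = r (if i \<in> K then i else k0)" for i
          have "T = t ` {..<n}"
          proof
            show "T \<subseteq> t ` {..<n}"
            proof
              fix x assume "x \<in> T"
              then obtain l where "l \<in> K" "x = r l" by (auto simp: T_def)
              then have "x = t l" "l < n" by (auto simp: t_def K_def)
              then show "x \<in> t ` {..<n}" by blast
            qed
          next
            show "t ` {..<n} \<subseteq> T" using k0 by (auto simp: t_def T_def)
          qed
          moreover have "\<forall>i<n. t i \<in> tuples d"
            using k0 r sub unfolding t_def K_def by auto
          ultimately show ?thesis by blast
        qed
        have idxa: "idx n A {c\<in>tuples d. c\<noteq>a'' \<and> c\<notin>T} = S - {kk}"
          if "kk < n" "a'' \<in> A kk" for a'' kk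
        proof -
          have "a'' \<notin> A l \<longleftrightarrow> l \<noteq> kk" if "l < n" for l using same[of l kk a''] that \<open>kk < n\<close> \<open>a'' \<in> A kk\<close> by blast
          moreover have "A l \<inter> T = {} \<longleftrightarrow> l \<notin> K" if "l < n" for l
          proof
            assume "A l \<inter> T = {}" then show "l \<notin> K" using r[OF that] by (auto simp: T_def)
          next
            assume "l \<notin> K"
            show "A l \<inter> T = {}"
            proof (rule ccontr)
              assume "A l \<inter> T \<noteq> {}"
              then obtain l' where "l' \<in> K" "r l' \<in> A l" by (auto simp: T_def)
              moreover have "l' < n" using \<open>l' \<in> K\<close> by (simp add: K_def)
              ultimately have "l' = l" using same[of l l' "r l'"] r[of l'] that by blast
              then show False using \<open>l \<notin> K\<close> \<open>l' \<in> K\<close> by simp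
            qed
          qed
          ultimately show ?thesis unfolding idxT using S by (auto simp: K_def)
        qed
        have "{c\<in>tuples d. c\<noteq>a \<and> c\<notin>T}\<in>Q \<longleftrightarrow> {c\<in>tuples d. c\<noteq>b \<and> c\<notin>T}\<in>Q"
          using R real unfolding RS_def by blast
        then show ?thesis unfolding Qc idxa[OF k] idxa[OF j] by simp
      qed
      have "\<exists>m t B. represents d Q (n-1) m B t"
      proof (cases "k < j")
        case True show ?thesis by (rule merge[OF part Qc True j(1)]) (use H in auto)
      next
        case False
        then have "j < k" using \<open>k \<noteq> j\<close> by simp
        show ?thesis by (rule merge[OF part Qc \<open>j < k\<close> k(1)]) (use H in auto)
      qed
      then obtain m' t B where "represents d Q (n-1) m' B t" by blast
      then have "n \<le> n - 1" by (rule minimal)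
      moreover have "n \<ge> 1" using k by simp
      ultimately show ?thesis by simp
    qed
  next
    assume "\<exists>k<n. a \<in> A k \<and> b \<in> A k"
    then obtain k' where k': "k' < n" "a \<in> A k'" "b \<in> A k'" by blast
    have "idx n A {c\<in>tuples d. c\<noteq>a \<and> c\<notin>T} = idx n A {c\<in>tuples d. c\<noteq>b \<and> c\<notin>T}" for T
    proof -
      have "a \<notin> A l \<longleftrightarrow> b \<notin> A l" if "l < n" for l
        using same[of l k' a] same[of l k' b] that k' by blast
      then show ?thesis unfolding idxT by blast
    qed
    then show "RS Q d n a b" unfolding RS_def Qc by simp
  qed
qed


theorem lemma19:
  fixes d n m :: nat and Q :: "nat list set set"
    and A :: "nat \<Rightarrow> nat list set" and s :: "nat \<Rightarrow> nat \<Rightarrow> bool"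
  assumes "min_represents d Q n m A s"
  shows "\<exists>\<chi> xs ys. wf d \<chi> \<and> length xs = d \<and> length ys = d \<and> distinct (xs @ ys) \<and>
           fv \<chi> \<subseteq> set xs \<union> set ys \<and>
           (\<forall>a\<in>tuples d. \<forall>b\<in>tuples d. \<forall>e.
              sat Q (upds (upds e xs a) ys b) \<chi> \<longleftrightarrow> (\<exists>k<n. a \<in> A k \<and> b \<in> A k))"
proof -
  have rep: "represents d Q n m A s" and minimal: "\<And>n' m' B t. represents d Q n' m' B t \<Longrightarrow> n \<le> n'"
    using assms by (auto simp: min_represents_def)
  have part: "is_partition d n A" using rep by (simp add: represents_def)
  define P where "P S = (\<exists>i<m. \<forall>l<n. s i l \<longleftrightarrow> l \<in> S)" for S
  have Qc: "\<And>X. X \<in> Q \<longleftrightarrow> X \<subseteq> tuples d \<and> P (idx n A X)"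
    using rep_char[OF rep] by (simp add: P_def)
  have sem: "sat Q (upds (upds e [0..<d] a) [d..<2*d] b) (chi d n) \<longleftrightarrow> (\<exists>k<n. a \<in> A k \<and> b \<in> A k)"
    if "a \<in> tuples d" "b \<in> tuples d" for a b e
    using sem_chi[OF that] math[OF part Qc minimal that] by simp
  have "wf d (chi d n) \<and> length [0..<d] = d \<and> length [d..<2*d] = d \<and> distinct ([0..<d] @ [d..<2*d]) \<and>
           fv (chi d n) \<subseteq> set [0..<d] \<union> set [d..<2*d] \<and>
           (\<forall>a\<in>tuples d. \<forall>b\<in>tuples d. \<forall>e.
              sat Q (upds (upds e [0..<d] a) [d..<2*d] b) (chi d n) \<longleftrightarrow> (\<exists>k<n. a \<in> A k \<and> b \<in> A k))"
    using wf_chi fv_chi sem by auto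
  then show ?thesis by blast
qed

end
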